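(* Let $G$ be a beetle-free graph and let $C$ be a clean shortest even hole of $G$. Then $N_G(C)\subseteq N_G^{1,1}(C)\cup N_G^{1}(C)\cup N_G^{2}(C)\cup N_G^{3}(C)$.
   Context: All graphs are finite, simple and undirected. A hole is an induced simple cycle with at least four nodes; it is even if it has an even number of nodes. A shortest even hole of $G$ is an even hole of $G$ with the minimum number of nodes among all even holes of $G$. For a subgraph $C$ of $G$, $N_G(C)$ is the set of nodes of $V(G)\setminus V(C)$ adjacent to some node of $C$. For a hole $C$ of $G$ and a node $x\notin V(C)$, let $N_C(x)=N_G(x)\cap V(C)$. The node $x$ is a major node of $C$ if $N_C(x)$ contains three distinct pairwise non-adjacent nodes; $M_G(C)$ is the set of major nodes of $C$. For $x\in N_G(C)\setminus M_G(C)$: $x\in N_G^i(C)$ ($1\le i\le 4$) if $|N_C(x)|=i$ and $C[N_C(x)]$ is connected; $x\in N_G^{i,j}(C)$ ($1\le i\le j\le 2$) if $C[N_C(x)]$ has exactly two connected components, with $i$ and $j$ nodes respectively. The hole $C$ is clean if $M_G(C)=N_G^{2,2}(C)=\varnothing$. A diamond is a $4$-cycle $b_1b_2b_3b_4b_1$ with exactly one chord $b_2b_4$. An induced subgraph $B$ of $G$ is a beetle of $G$ if $B$ is exactly the union of (1) a diamond on nodes $b_1,b_2,b_3,b_4$ (cycle $b_1b_2b_3b_4b_1$, chord $b_2b_4$) and (2) a tree $I$ of $G\setminus\{b_4\}$ having exactly three leaves $b_1,b_2,b_3$, such that $I\setminus\{b_1,b_2,b_3\}$ is an induced tree of $G$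 not adjacent to $b_4$. $G$ is beetle-free if it has no beetle. *)

theory Defs
  imports Main
begin

definition simple_graph :: "'a set \<Rightarrow> ('a \<Rightarrow> 'a \<Rightarrow> bool) \<Rightarrow> bool" where
  "simple_graph V E \<longleftrightarrow> finite V \<and> (\<forall>u v. E u v \<longrightarrow> u \<in> V \<and> v \<in> V)
     \<and> (\<forall>u v. E u v \<longrightarrow> E v u) \<and> (\<forall>u. \<not> E u u)"

definition restr :: "('a \<Rightarrow> 'a \<Rightarrow> bool) \<Rightarrow> 'a set \<Rightarrow> 'a \<Rightarrow> 'a \<Rightarrow> bool" where
  "restr E A u v \<longleftrightarrow> E u v \<and> u \<in> A \<and> v \<in> A"

definition comp_of :: "('a \<Rightarrow> 'a \<Rightarrow> bool) \<Rightarrow> 'a set \<Rightarrow> 'a \<Rightarrow> 'a set" where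
  "comp_of E A x = {y \<in> A. (restr E A)\<^sup>*\<^sup>* x y}"

definition comps :: "('a \<Rightarrow> 'a \<Rightarrow> bool) \<Rightarrow> 'a set \<Rightarrow> 'a set set" where
  "comps E A = comp_of E A ` A"

definition connected_on :: "('a \<Rightarrow> 'a \<Rightarrow> bool) \<Rightarrow> 'a set \<Rightarrow> bool" where
  "connected_on E A \<longleftrightarrow> A \<noteq> {} \<and> (\<forall>x\<in>A. \<forall>y\<in>A. (restr E A)\<^sup>*\<^sup>* x y)"

definition is_cycle_in :: "('a \<Rightarrow> 'a \<Rightarrow> bool) \<Rightarrow> 'a set \<Rightarrow> 'a list \<Rightarrow> bool" where
  "is_cycle_in E A cs \<longleftrightarrow> length cs \<ge> 3 \<and> distinct cs \<and> set cs \<subseteq> A \<and>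
     (\<forall>i < length cs. restr E A (cs ! i) (cs ! ((i + 1) mod length cs)))"

definition is_tree :: "('a \<Rightarrow> 'a \<Rightarrow> bool) \<Rightarrow> 'a set \<Rightarrow> bool" where
  "is_tree E A \<longleftrightarrow> finite A \<and> connected_on E A \<and> (\<nexists>cs. is_cycle_in E A cs)"

definition hole :: "'a set \<Rightarrow> ('a \<Rightarrow> 'a \<Rightarrow> bool) \<Rightarrow> 'a set \<Rightarrow> bool" where
  "hole V E C \<longleftrightarrow> C \<subseteq> V \<and> (\<exists>cs. set cs = C \<and> distinct cs \<and> length cs \<ge> 4 \<and>
     (\<forall>i < length cs. \<forall>j < length cs. E (cs ! i) (cs ! j) \<longleftrightarrow>
        (j = (i + 1) mod length cs \<or> i = (j + 1) mod length cs)))"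

definition even_hole :: "'a set \<Rightarrow> ('a \<Rightarrow> 'a \<Rightarrow> bool) \<Rightarrow> 'a set \<Rightarrow> bool" where
  "even_hole V E C \<longleftrightarrow> hole V E C \<and> even (card C)"

definition shortest_even_hole :: "'a set \<Rightarrow> ('a \<Rightarrow> 'a \<Rightarrow> bool) \<Rightarrow> 'a set \<Rightarrow> bool" where
  "shortest_even_hole V E C \<longleftrightarrow> even_hole V E C \<and>
     (\<forall>D. even_hole V E D \<longrightarrow> card C \<le> card D)"

definition nbhd :: "'a set \<Rightarrow> ('a \<Rightarrow> 'a \<Rightarrow> bool) \<Rightarrow> 'a set \<Rightarrow> 'a set" where
  "nbhd V E C = {x \<in> V - C. \<exists>c \<in> C. E x c}"

definition nbC :: "('a \<Rightarrow> 'a \<Rightarrow> bool) \<Rightarrow> 'a set \<Rightarrow> 'a \<Rightarrow> 'a set" where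
  "nbC E C x = {c \<in> C. E x c}"

definition major :: "'a set \<Rightarrow> ('a \<Rightarrow> 'a \<Rightarrow> bool) \<Rightarrow> 'a set \<Rightarrow> 'a set" where
  "major V E C = {x \<in> V - C. \<exists>a b c. a \<in> nbC E C x \<and> b \<in> nbC E C x \<and> c \<in> nbC E C x \<and>
      a \<noteq> b \<and> a \<noteq> c \<and> b \<noteq> c \<and> \<not> E a b \<and> \<not> E a c \<and> \<not> E b c}"

definition Ni :: "'a set \<Rightarrow> ('a \<Rightarrow> 'a \<Rightarrow> bool) \<Rightarrow> 'a set \<Rightarrow> nat \<Rightarrow> 'a set" where
  "Ni V E C i = {x \<in> nbhd V E C - major V E C.
      card (nbC E C x) = i \<and> connected_on E (nbC E C x)}"

definition Nij :: "'a set \<Rightarrow> ('a \<Rightarrow> 'a \<Rightarrow> bool) \<Rightarrow> 'a set \<Rightarrow> nat \<Rightarrow> nat \<Rightarrow> 'a set" where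
  "Nij V E C i j = {x \<in> nbhd V E C - major V E C.
      \<exists>P Q. comps E (nbC E C x) = {P, Q} \<and> P \<noteq> Q \<and> card P = i \<and> card Q = j}"

definition clean :: "'a set \<Rightarrow> ('a \<Rightarrow> 'a \<Rightarrow> bool) \<Rightarrow> 'a set \<Rightarrow> bool" where
  "clean V E C \<longleftrightarrow> major V E C = {} \<and> Nij V E C 2 2 = {}"

definition diamond_edge :: "'a \<Rightarrow> 'a \<Rightarrow> 'a \<Rightarrow> 'a \<Rightarrow> 'a \<Rightarrow> 'a \<Rightarrow> bool" where
  "diamond_edge b1 b2 b3 b4 u v \<longleftrightarrow>
     {u, v} \<in> {{b1, b2}, {b2, b3}, {b3, b4}, {b4, b1}, {b2, b4}}"

definition beetle :: "'a set \<Rightarrow> ('a \<Rightarrow> 'a \<Rightarrow> bool) \<Rightarrow> 'a \<Rightarrow> 'a \<Rightarrow> 'a \<Rightarrow> 'a \<Rightarrow> 'a set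
    \<Rightarrow> ('a \<Rightarrow> 'a \<Rightarrow> bool) \<Rightarrow> bool" where
  "beetle V E b1 b2 b3 b4 T F \<longleftrightarrow>
     distinct [b1, b2, b3, b4] \<and> {b1, b2, b3, b4} \<subseteq> V \<and>
     E b1 b2 \<and> E b2 b3 \<and> E b3 b4 \<and> E b4 b1 \<and> E b2 b4 \<and> \<not> E b1 b3 \<and>
     T \<subseteq> V - {b4} \<and> {b1, b2, b3} \<subseteq> T \<and>
     (\<forall>u v. F u v \<longrightarrow> u \<in> T \<and> v \<in> T \<and> E u v) \<and>
     (\<forall>u v. F u v \<longrightarrow> F v u) \<and>
     is_tree F T \<and>
     {v \<in> T. card {u. F v u} = 1} = {b1, b2, b3} \<and>
     (\<forall>u \<in> insert b4 T. \<forall>v \<in> insert b4 T.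
        E u v \<longleftrightarrow> (F u v \<or> diamond_edge b1 b2 b3 b4 u v)) \<and>
     is_tree E (T - {b1, b2, b3}) \<and>
     (\<forall>u \<in> T - {b1, b2, b3}. \<not> E u b4)"

definition beetle_free :: "'a set \<Rightarrow> ('a \<Rightarrow> 'a \<Rightarrow> bool) \<Rightarrow> bool" where
  "beetle_free V E \<longleftrightarrow> (\<nexists>b1 b2 b3 b4 T F. beetle V E b1 b2 b3 b4 T F)"

end

theory Submission
  imports Defs
begin


lemma rtranclp_sym_gen: assumes "\<And>u v. R u v \<Longrightarrow> R v u" "R\<^sup>*\<^sup>* a b" shows "R\<^sup>*\<^sup>* b a"
  using assms(2)
proof induction
  case base then show ?case by simp
next
  case (step y z)
  then show ?case by (meson assms(1) converse_rtranclp_into_rtranclp)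
qed

lemma connected_root:
  assumes sym: "\<And>u v. F u v \<Longrightarrow> F v u" and r: "r \<in> A" and reach: "\<forall>y\<in>A. (restr F A)\<^sup>*\<^sup>* r y"
  shows "connected_on F A"
proof -
  have rs: "(restr F A)\<^sup>*\<^sup>* b a" if "(restr F A)\<^sup>*\<^sup>* a b" for a b
    using that by (rule rtranclp_sym_gen[rotated]) (auto simp: restr_def intro: sym)
  have "\<forall>y\<in>A. \<forall>z\<in>A. (restr F A)\<^sup>*\<^sup>* y z"
    using reach rs by (meson rtranclp_trans)
  then show ?thesis using r by (auto simp: connected_on_def)
qed

lemma connected_single: "connected_on F {u}" by (auto simp: connected_on_def)

lemma connected_pair: assumes "F u v" "\<And>a b. F a b \<Longrightarrow> F b a" shows "connected_on F {u,v}"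
proof -
  have "restr F {u,v} u v" using assms(1) by (simp add: restr_def)
  then have "\<forall>y\<in>{u,v}. (restr F {u,v})\<^sup>*\<^sup>* u y" by auto
  then show ?thesis using connected_root[of F u "{u,v}"] assms(2) by blast
qed

lemma connected_triple: assumes "F v u" "F v w" "\<And>a b. F a b \<Longrightarrow> F b a" shows "connected_on F {u,v,w}"
proof -
  have "restr F {u,v,w} v u" "restr F {u,v,w} v w" using assms(1,2) by (auto simp: restr_def)
  then have "\<forall>y\<in>{u,v,w}. (restr F {u,v,w})\<^sup>*\<^sup>* v y" by auto
  then show ?thesis using connected_root[of F v "{u,v,w}"] assms(3) by blast
qed

lemma comp_of_block:
  assumes PN: "P \<subseteq> N" and con: "connected_on F P" and cl: "\<forall>u\<in>P. \<forall>v\<in>N. F u v \<longrightarrow> v \<in> P" and u: "u \<in> P"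
  shows "comp_of F N u = P"
proof
  show "comp_of F N u \<subseteq> P"
  proof
    fix y assume "y \<in> comp_of F N u"
    then have "(restr F N)\<^sup>*\<^sup>* u y" by (simp add: comp_of_def)
    then show "y \<in> P"
    proof induction
      case base then show ?case using u by simp
    next
      case (step y z) then show ?case using cl by (auto simp: restr_def)
    qed
  qed
next
  show "P \<subseteq> comp_of F N u"
  proof
    fix y assume y: "y \<in> P"
    then have "(restr F P)\<^sup>*\<^sup>* u y" using con u by (simp add: connected_on_def)
    moreover have "restr F P \<le> restr F N" using PN by (auto simp: restr_def)
    ultimately have "(restr F N)\<^sup>*\<^sup>* u y" using rtranclp_mono by blast
    then show "y \<in> comp_of F N u" using y PN by (auto simp: comp_of_def)
  qed
qed

lemma comps_two:
  assumes "N = P \<union> Q" "P \<noteq> {}" "Q \<noteq> {}"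
    "connected_on F P" "connected_on F Q"
    "\<forall>u\<in>P. \<forall>v\<in>N. F u v \<longrightarrow> v \<in> P" "\<forall>u\<in>Q. \<forall>v\<in>N. F u v \<longrightarrow> v \<in> Q"
  shows "comps F N = {P, Q}"
proof -
  have PN: "P \<subseteq> N" "Q \<subseteq> N" using assms(1) by blast+
  have a: "\<And>u. u \<in> P \<Longrightarrow> comp_of F N u = P" by (rule comp_of_block[OF PN(1) assms(4) assms(6)])
  have b: "\<And>u. u \<in> Q \<Longrightarrow> comp_of F N u = Q" by (rule comp_of_block[OF PN(2) assms(5) assms(7)])
  obtain p q where pq: "p \<in> P" "q \<in> Q" using assms(2,3) by blast
  show ?thesis unfolding comps_def
  proof
    show "comp_of F N ` N \<subseteq> {P, Q}" using a b assms(1) by blast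
    have "P \<in> comp_of F N ` N" using a[OF pq(1)] pq(1) assms(1) by (metis UnI1 image_eqI)
    moreover have "Q \<in> comp_of F N ` N" using b[OF pq(2)] pq(2) assms(1) by (metis UnI2 image_eqI)
    ultimately show "{P, Q} \<subseteq> comp_of F N ` N" by blast
  qed
qed

lemma no_cycle_rank:
  fixes w :: "'a \<Rightarrow> nat"
  assumes sym: "\<And>u v. F u v \<Longrightarrow> F v u"
  and rk: "\<And>v u1 u2. v \<in> A \<Longrightarrow> u1 \<in> A \<Longrightarrow> u2 \<in> A \<Longrightarrow> F v u1 \<Longrightarrow> F v u2 \<Longrightarrow> w u1 \<le> w v \<Longrightarrow> w u2 \<le> w v \<Longrightarrow> u1 = u2"
  shows "\<not> is_cycle_in F A cs"
proof
  assume cyc: "is_cycle_in F A cs"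
  let ?m = "length cs"
  have m3: "3 \<le> ?m" and dcs: "distinct cs" and sA: "set cs \<subseteq> A"
    and ad: "\<forall>i<?m. restr F A (cs!i) (cs!((i+1) mod ?m))" using cyc by (auto simp: is_cycle_in_def)
  define M where "M = Max (w ` set cs)"
  have ne: "set cs \<noteq> {}" using m3 by auto
  have "M \<in> w ` set cs" unfolding M_def using ne by simp
  then obtain i where i: "i < ?m" "w (cs!i) = M" by (auto simp: in_set_conv_nth)
  have le: "\<And>j. j < ?m \<Longrightarrow> w (cs!j) \<le> M" unfolding M_def by simp
  define j1 where "j1 = (if i+1 = ?m then 0 else i+1)"
  define j0 where "j0 = (if i = 0 then ?m-1 else i-1)"
  have j1m: "(i+1) mod ?m = j1" unfolding j1_def using i by auto
  have j0m: "(j0+1) mod ?m = i" unfolding j0_def using i m3 by auto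
  have j1l: "j1 < ?m" "j0 < ?m" unfolding j1_def j0_def using i m3 by auto
  have r1: "F (cs!i) (cs!j1)" using ad i j1m by (auto simp: restr_def)
  have r0: "F (cs!i) (cs!j0)" using ad j1l j0m sym by (auto simp: restr_def)
  have "cs!j1 = cs!j0"
    using rk[OF _ _ _ r1 r0] le j1l i sA by (metis nth_mem subsetD)
  then have "j1 = j0" using dcs j1l by (simp add: nth_eq_iff_index_eq)
  then show False unfolding j1_def j0_def using i m3 by (auto split: if_splits)
qed



lemma mod_cancel_lt:
  fixes p s t n :: nat
  assumes "s < n" "t < n" "(p+s) mod n = (p+t) mod n"
  shows "s = t"
proof -
  have "s mod n = t mod n" using assms(3) using nat_mod_eq_iff by auto
  then show ?thesis using assms by simp
qed

lemma mod_small2: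
  fixes m n :: nat
  assumes "m < 2*n"
  shows "m mod n = (if m < n then m else m - n)"
  using assms by (simp add: le_mod_geq)

lemma three_elems: "3 \<le> card A \<Longrightarrow> \<exists>a b c. a\<in>A \<and> b\<in>A \<and> c\<in>A \<and> a\<noteq>b \<and> a\<noteq>c \<and> b\<noteq>c"
proof -
  assume "3 \<le> card A"
  then obtain T where T: "T \<subseteq> A" "card T = 3" by (meson obtain_subset_with_card_n)
  then obtain a b c where "T = {a,b,c}" "a\<noteq>b" "a\<noteq>c" "b\<noteq>c"
    by (auto simp: card_Suc_eq numeral_3_eq_3)
  then show ?thesis using T by auto
qed

definition adjo :: "nat \<Rightarrow> nat \<Rightarrow> nat \<Rightarrow> bool" where
 "adjo n s t \<longleftrightarrow> t = s+1 \<or> s = t+1 \<or> (s = n-1 \<and> t = 0) \<or> (t = n-1 \<and> s = 0)"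

lemma rank1:
  fixes n :: nat
  defines "r \<equiv> \<lambda>k::nat. if k = 0 then n else if k = 1 then n+1 else k"
  assumes "4 \<le> n" "s1 < n" "s2 < n" "t < n" "s1 \<noteq> 2" "s2 \<noteq> 2" "t \<noteq> 2"
    "adjo n t s1" "adjo n t s2" "r s1 \<le> r t" "r s2 \<le> r t"
  shows "s1 = s2"
  using assms unfolding adjo_def by (auto split: if_splits)

lemma rank2:
  fixes n :: nat
  defines "r \<equiv> \<lambda>k::nat. if k = 0 then n else k"
  assumes "4 \<le> n" "s1 < n" "s2 < n" "t < n" "s1 \<notin> {1,2,3}" "s2 \<notin> {1,2,3}" "t \<notin> {1,2,3}"
    "adjo n t s1" "adjo n t s2" "r s1 \<le> r t" "r s2 \<le> r t"
  shows "s1 = s2"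
  using assms unfolding adjo_def by (auto split: if_splits)

locale ctx =
  fixes V :: "'a set" and E :: "'a \<Rightarrow> 'a \<Rightarrow> bool" and C :: "'a set" and cs :: "'a list" and x :: 'a
  assumes sg: "simple_graph V E"
  and cs_set: "set cs = C" and dist: "distinct cs" and len: "4 \<le> length cs"
  and adjcs: "\<forall>i<length cs. \<forall>j<length cs. E (cs!i) (cs!j) \<longleftrightarrow> (j = (i+1) mod length cs \<or> i = (j+1) mod length cs)"
  and CV: "C \<subseteq> V" and xV: "x \<in> V" and xC: "x \<notin> C"
  and ev: "even (length cs)"
  and short: "\<forall>D. even_hole V E D \<longrightarrow> length cs \<le> card D"
begin

abbreviation "n \<equiv> length cs"
definition c :: "nat \<Rightarrow> 'a" where "c i = cs ! (i mod n)"

lemma npos: "0 < n" using len by linarith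
lemma c_n: "c (i + n) = c i" by (simp add: c_def)
lemma c_in: "c i \<in> C" using cs_set npos by (auto simp: c_def)
lemma c_V: "c i \<in> V" using c_in CV by auto
lemma c_ne_x: "c i \<noteq> x" using c_in xC by auto
lemma c_eq_iff: "c i = c j \<longleftrightarrow> i mod n = j mod n" using dist npos by (simp add: c_def nth_eq_iff_index_eq)
lemma c_off_eq: "s < n \<Longrightarrow> t < n \<Longrightarrow> c (p+s) = c (p+t) \<longleftrightarrow> s = t"
  using c_eq_iff mod_cancel_lt by blast
lemma Esym: "E u v \<Longrightarrow> E v u" using sg by (auto simp: simple_graph_def)
lemma Eirr: "\<not> E u u" using sg by (auto simp: simple_graph_def)
lemma E_c: "E (c i) (c j) \<longleftrightarrow> j mod n = Suc i mod n \<or> i mod n = Suc j mod n"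
  using adjcs npos by (simp add: c_def mod_Suc_eq)
lemma E_succ: "E (c i) (c (Suc i))" using E_c by simp

lemma succ_off: assumes "s<n" "t<n"
  shows "(p+t) mod n = Suc (p+s) mod n \<longleftrightarrow> (t = s+1 \<or> (s = n-1 \<and> t = 0))"
proof (cases "s+1 < n")
  case True
  have "Suc (p+s) = p + (s+1)" by simp
  then have "(p+t) mod n = Suc (p+s) mod n \<longleftrightarrow> t = s+1" using mod_cancel_lt[of t n "s+1" p] True assms by auto
  then show ?thesis using True by auto
next
  case False
  then have "s = n - 1" using assms by simp
  then have "Suc (p+s) = p + n" using npos by simp
  then have "Suc (p+s) mod n = (p + 0) mod n" by (simp only: mod_add_self2 add_0_right)
  then show ?thesis using False assms mod_cancel_lt[of 0 n t p] npos by auto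
qed

lemma E_off: "s<n \<Longrightarrow> t<n \<Longrightarrow> E (c(p+s)) (c(p+t)) \<longleftrightarrow> adjo n s t"
  unfolding E_c adjo_def using succ_off by auto

lemma c_repr: assumes "v \<in> C" shows "\<exists>t<n. v = c(p+t)"
proof -
  obtain k where k: "k < n" "v = cs ! k" using assms cs_set by (auto simp: in_set_conv_nth)
  define t where "t = (k + n - p mod n) mod n"
  have "(p + t) mod n = (p + (k + n - p mod n)) mod n" unfolding t_def by (simp add: mod_add_right_eq)
  also have "p + (k + n - p mod n) = (p div n) * n + k + n"
    using mod_less_divisor[OF npos, of p] div_mult_mod_eq[of p n] by linarith
  also have "((p div n) * n + k + n) mod n = k" using k by simp
  finally have "c (p+t) = v" using k by (simp add: c_def)
  moreover have "t < n" using npos by (simp add: t_def)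
  ultimately show ?thesis by auto
qed

lemma arc_hole:
  assumes d2: "2 \<le> d" and dn: "d + 2 < n" and x0: "E x (c p)" and xd: "E x (c (p+d))"
    and xin: "\<forall>t. 0<t \<and> t<d \<longrightarrow> \<not> E x (c (p+t))" and evd: "even d"
  shows False
proof -
  define hs where "hs = x # map (\<lambda>t. c(p+t)) [0..<Suc d]"
  have lenhs: "length hs = d + 2" by (simp add: hs_def)
  have nth0: "hs ! 0 = x" by (simp add: hs_def)
  have nthS: "\<And>k. k \<le> d \<Longrightarrow> hs ! Suc k = c (p+k)" by (simp add: hs_def nth_Cons_Suc del: upt_Suc)
  have injc: "inj_on (\<lambda>t. c(p+t)) {0..<Suc d}"
    by (rule inj_onI) (use c_off_eq dn in auto)
  have disths: "distinct hs" unfolding hs_def using injc c_ne_x by (auto simp: distinct_map simp del: upt_Suc)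
  have xadj: "\<And>t. t \<le> d \<Longrightarrow> E x (c(p+t)) \<longleftrightarrow> t = 0 \<or> t = d"
    using x0 xd xin by (metis add_0_right le_neq_implies_less not_gr_zero)
  have cadj: "\<And>s t. s \<le> d \<Longrightarrow> t \<le> d \<Longrightarrow> E (c(p+s)) (c(p+t)) \<longleftrightarrow> t = s+1 \<or> s = t+1"
  proof -
    fix s t assume "s \<le> d" "t \<le> d"
    then have "s < n" "t < n" using dn by auto
    then have "E (c(p+s)) (c(p+t)) \<longleftrightarrow> adjo n s t" by (rule E_off)
    then show "E (c(p+s)) (c(p+t)) \<longleftrightarrow> t = s+1 \<or> s = t+1"
      unfolding adjo_def using \<open>s \<le> d\<close> \<open>t \<le> d\<close> dn by auto
  qed
  have modL: "\<And>s. s \<le> d \<Longrightarrow> (Suc s + 1) mod (d+2) = (if s = d then 0 else s+2)"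
    by auto
  have m1: "1 mod (d+2) = 1" using d2 by simp
  have adjhs: "\<forall>i<d+2. \<forall>j<d+2. E (hs!i) (hs!j) \<longleftrightarrow> (j = (i+1) mod (d+2) \<or> i = (j+1) mod (d+2))"
  proof (intro allI impI)
    fix i j assume i: "i < d+2" and j: "j < d+2"
    show "E (hs!i) (hs!j) \<longleftrightarrow> (j = (i+1) mod (d+2) \<or> i = (j+1) mod (d+2))"
    proof (cases i)
      case 0
      show ?thesis
      proof (cases j)
        case 0 then show ?thesis using \<open>i=0\<close> nth0 Eirr m1 by simp
      next
        case (Suc t)
        then have "t \<le> d" using j by simp
        then show ?thesis using \<open>i=0\<close> Suc nth0 nthS xadj modL m1 by auto
      qed
    next
      case (Suc s)
      then have s: "s \<le> d" using i by simp
      show ?thesis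
      proof (cases j)
        case 0
        have "E (c(p+s)) x \<longleftrightarrow> E x (c(p+s))" using Esym by blast
        then show ?thesis using Suc 0 nth0 nthS s xadj modL m1 by auto
      next
        case (Suc t)
        then have "t \<le> d" using j by simp
        then show ?thesis using \<open>i = Suc s\<close> Suc nthS s cadj modL by auto
      qed
    qed
  qed
  have hsV: "set hs \<subseteq> V" unfolding hs_def using xV c_V by auto
  have "hole V E (set hs)" unfolding hole_def
    using hsV disths lenhs adjhs d2 by (intro conjI exI[of _ hs]) auto
  moreover have "card (set hs) = d + 2" using disths lenhs distinct_card by metis
  ultimately have "even_hole V E (set hs)" using evd by (simp add: even_hole_def)
  then have "n \<le> d + 2" using short \<open>card (set hs) = d + 2\<close> by metis
  then show False using dn by simp
qed

definition off :: "nat \<Rightarrow> 'a \<Rightarrow> nat" where "off p v = (SOME t. t < n \<and> v = c(p+t))"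
lemma off_c: "t < n \<Longrightarrow> off p (c(p+t)) = t"
  unfolding off_def by (rule some_equality) (use c_off_eq in auto)

lemma card_ge2: "finite A \<Longrightarrow> a \<in> A \<Longrightarrow> b \<in> A \<Longrightarrow> a \<noteq> b \<Longrightarrow> card A \<noteq> 1"
  by (metis card_1_singletonE singletonD)

lemma beetle_ex:
  assumes nb: "\<forall>t<n. E x (c(p+t)) \<longleftrightarrow> t \<le> 3"
  shows "\<exists>b1 b2 b3 b4 T F. beetle V E b1 b2 b3 b4 T F"
proof -
  have n4: "4 \<le> n" using len .
  define TC where "TC = (\<lambda>t. c(p+t)) ` {t. t<n \<and> t \<noteq> 2}"
  define T where "T = insert x TC"
  define F where "F = (\<lambda>u v. u \<in> T \<and> v \<in> T \<and> E u v \<and> {u,v} \<noteq> {x, c(p+1)} \<and> {u,v} \<noteq> {x, c(p+3)})"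
  have cT: "c(p+t) \<in> T \<longleftrightarrow> t \<noteq> 2" if "t < n" for t
  proof
    assume "c(p+t) \<in> T"
    then obtain s where "s < n" "s \<noteq> 2" "c(p+t) = c(p+s)" unfolding T_def TC_def using c_ne_x by auto
    then show "t \<noteq> 2" using c_off_eq that by blast
  qed (use that in \<open>auto simp: T_def TC_def\<close>)
  have xT: "x \<in> T" by (simp add: T_def)
  have finT: "finite T" by (simp add: T_def TC_def)
  have Tcases: "v = x \<or> (\<exists>t<n. t \<noteq> 2 \<and> v = c(p+t))" if "v \<in> T" for v
    using that by (auto simp: T_def TC_def)
  have Fsym: "F u v \<Longrightarrow> F v u" for u v unfolding F_def using Esym by (auto simp: insert_commute)
  have FTE: "F u v \<Longrightarrow> u \<in> T \<and> v \<in> T \<and> E u v" for u v unfolding F_def by auto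
  have Fcc: "F (c(p+s)) (c(p+t)) \<longleftrightarrow> s \<noteq> 2 \<and> t \<noteq> 2 \<and> adjo n s t" if "s<n" "t<n" for s t
    unfolding F_def using cT[OF that(1)] cT[OF that(2)] E_off[OF that] c_ne_x by (auto simp: doubleton_eq_iff)
  have Fxc: "F x (c(p+t)) \<longleftrightarrow> t = 0" if "t<n" for t
  proof -
    have "{x, c(p+t)} = {x, c(p+1)} \<longleftrightarrow> t = 1" using c_off_eq[OF that, of 1 p] n4 c_ne_x
      by (auto simp: doubleton_eq_iff)
    moreover have "{x, c(p+t)} = {x, c(p+3)} \<longleftrightarrow> t = 3" using c_off_eq[OF that, of 3 p] n4 c_ne_x
      by (auto simp: doubleton_eq_iff)
    ultimately show ?thesis unfolding F_def using xT cT[OF that] nb that by auto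
  qed
  have Fcx: "F (c(p+t)) x \<longleftrightarrow> t = 0" if "t<n" for t using Fxc[OF that] Fsym by blast
  have Fxx: "\<not> F x x" using Eirr F_def by auto
  have np: "0 < n" "1 < n" "2 < n" "3 < n" "n - 1 < n" using n4 by auto
  let ?R = "restr F T"
  have RF: "?R u v" if "F u v" for u v using that FTE by (simp add: restr_def)
  have reach3: "?R\<^sup>*\<^sup>* (c(p+3)) (c(p+(3+k)))" if "3+k < n" for k
    using that
  proof (induction k)
    case 0 then show ?case by simp
  next
    case (Suc k)
    then have "?R\<^sup>*\<^sup>* (c(p+3)) (c(p+(3+k)))" by simp
    moreover have "F (c(p+(3+k))) (c(p+(3+Suc k)))" using Fcc[of "3+k" "3+Suc k"] Suc.prems
      by (simp add: adjo_def)
    ultimately show ?case using RF by (meson rtranclp.rtrancl_into_rtrancl)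
  qed
  have reach0: "?R\<^sup>*\<^sup>* (c(p+3)) (c p)"
  proof -
    have h: "3 + (n-4) < n" using n4 by simp
    have eq: "3 + (n-4) = n - 1" using n4 by simp
    have "?R\<^sup>*\<^sup>* (c(p+3)) (c(p+(3+(n-4))))" by (rule reach3[OF h])
    then have r1: "?R\<^sup>*\<^sup>* (c(p+3)) (c(p+(n-1)))" by (simp only: eq)
    have "F (c(p+(n-1))) (c(p+0))" using Fcc[of "n-1" 0] np n4 by (simp add: adjo_def)
    then have "?R (c(p+(n-1))) (c p)" using RF by simp
    then show ?thesis using r1 by (rule rtranclp.rtrancl_into_rtrancl[rotated])
  qed
  have reach1: "?R\<^sup>*\<^sup>* (c(p+3)) (c(p+1))"
  proof -
    have "F (c(p+0)) (c(p+1))" using Fcc[of 0 1] np by (simp add: adjo_def)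
    then show ?thesis using reach0 RF by (metis add_0_right rtranclp.rtrancl_into_rtrancl)
  qed
  have reachx: "?R\<^sup>*\<^sup>* (c(p+3)) x"
  proof -
    have "F (c(p+0)) x" using Fcx[of 0] np by simp
    then show ?thesis using reach0 RF by (metis add_0_right rtranclp.rtrancl_into_rtrancl)
  qed
  have reachall: "\<forall>y\<in>T. ?R\<^sup>*\<^sup>* (c(p+3)) y"
  proof
    fix y assume "y \<in> T"
    then consider "y = x" | t where "t<n" "t \<noteq> 2" "y = c(p+t)" using Tcases by blast
    then show "?R\<^sup>*\<^sup>* (c(p+3)) y"
    proof cases
      case 1 then show ?thesis using reachx by simp
    next
      case 2
      then consider "t = 0" | "t = 1" | "3 \<le> t" by linarith
      then show ?thesis
      proof cases
        case 1 then show ?thesis using 2 reach0 by simp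
      next
        case 2 then show ?thesis using \<open>y = c(p+t)\<close> reach1 by simp
      next
        case 3 then show ?thesis using 2 reach3[of "t-3"] by simp
      qed
    qed
  qed
  have conT: "connected_on F T"
    by (rule connected_root[of F "c(p+3)"]) (use Fsym cT np reachall in auto)
  define w where "w = (\<lambda>v. if v = x then n+2 else (let t = off p v in if t = 0 then n else if t = 1 then n+1 else t))"
  have wc: "w (c(p+t)) = (if t = 0 then n else if t = 1 then n+1 else t)" if "t<n" for t
    unfolding w_def using off_c[OF that] c_ne_x by simp
  have wx: "w x = n+2" by (simp add: w_def)
  have nocyc: "\<nexists>cs. is_cycle_in F T cs"
  proof -
    have "\<not> is_cycle_in F T cs'" for cs'
    proof (rule no_cycle_rank[where w=w])
      show "F u v \<Longrightarrow> F v u" for u v by (rule Fsym)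
    next
      fix v u1 u2 assume v: "v \<in> T" and u1: "u1 \<in> T" and u2: "u2 \<in> T" and f1: "F v u1" and f2: "F v u2"
        and w1: "w u1 \<le> w v" and w2: "w u2 \<le> w v"
      show "u1 = u2"
      proof (cases "v = x")
        case True
        have "u1 = c(p+0)" using u1 f1 True Fxx Fxc Tcases by (metis)
        moreover have "u2 = c(p+0)" using u2 f2 True Fxx Fxc Tcases by (metis)
        ultimately show ?thesis by simp
      next
        case False
        then obtain t where t: "t<n" "t\<noteq>2" "v = c(p+t)" using Tcases v by blast
        have nx: "u \<noteq> x" if "u \<in> {u1,u2}" for u
        proof
          assume "u = x"
          then have "t = 0" using that f1 f2 Fcx t by auto
          moreover have "w (c p) = n" using wc[of 0] np by simp
          ultimately show False using wx w1 w2 that \<open>u = x\<close> t by auto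
        qed
        obtain s1 where s1: "s1<n" "s1\<noteq>2" "u1 = c(p+s1)" using Tcases u1 nx by blast
        obtain s2 where s2: "s2<n" "s2\<noteq>2" "u2 = c(p+s2)" using Tcases u2 nx by blast
        have "s1 = s2"
          using rank1[of n s1 s2 t] n4 s1 s2 t f1 f2 Fcc w1 w2 wc by auto
        then show ?thesis using s1 s2 by simp
      qed
    qed
    then show ?thesis by blast
  qed
  have treeT: "is_tree F T" unfolding is_tree_def using finT conT nocyc by blast
  have finN: "finite {u. F v u}" for v using finT FTE by (metis (no_types, lifting) mem_Collect_eq rev_finite_subset subsetI)
  have Lx: "{u. F x u} = {c p}"
  proof -
    have "F x u \<longleftrightarrow> u = c p" for u
    proof
      assume f: "F x u"
      then have "u \<in> T" using FTE by blast
      then show "u = c p" using Tcases f Fxx Fxc by (metis add_0_right)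
    qed (use Fxc[of 0] np in simp)
    then show ?thesis by auto
  qed
  have L1: "{u. F (c(p+1)) u} = {c p}"
  proof -
    have "F (c(p+1)) u \<longleftrightarrow> u = c p" for u
    proof
      assume f: "F (c(p+1)) u"
      then have "u \<in> T" using FTE by blast
      then consider "u = x" | s where "s<n" "s\<noteq>2" "u = c(p+s)" using Tcases by blast
      then show "u = c p"
      proof cases
        case 1 then show ?thesis using f Fcx[of 1] np by simp
      next
        case 2 then have "s = 0" using f Fcc[of 1 s] np n4 by (auto simp: adjo_def)
        then show ?thesis using 2 by simp
      qed
    qed (use Fcc[of 1 0] np in \<open>simp add: adjo_def\<close>)
    then show ?thesis by auto
  qed
  define s3 where "s3 = (if n = 4 then 0 else 4::nat)"
  have s3n: "s3 < n" using n4 by (simp add: s3_def)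
  have L3: "{u. F (c(p+3)) u} = {c(p+s3)}"
  proof -
    have "F (c(p+3)) u \<longleftrightarrow> u = c(p+s3)" for u
    proof
      assume f: "F (c(p+3)) u"
      then have "u \<in> T" using FTE by blast
      then consider "u = x" | s where "s<n" "s\<noteq>2" "u = c(p+s)" using Tcases by blast
      then show "u = c(p+s3)"
      proof cases
        case 1 then show ?thesis using f Fcx[of 3] np by simp
      next
        case 2 then have "s = s3" using f Fcc[of 3 s] np n4 by (auto simp: adjo_def s3_def)
        then show ?thesis using 2 by simp
      qed
    next
      assume "u = c(p+s3)"
      then show "F (c(p+3)) u" using Fcc[of 3 s3] np s3n n4 by (auto simp: adjo_def s3_def)
    qed
    then show ?thesis by auto
  qed
  have Lother: "card {u. F (c(p+t)) u} \<noteq> 1" if "t<n" "t \<notin> {1,2,3}" for t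
  proof (cases "t = 0")
    case True
    have "F (c(p+t)) (c(p+1))" using Fcc[of t 1] True np n4 by (simp add: adjo_def)
    moreover have "F (c(p+t)) (c(p+(n-1)))" using Fcc[of t "n-1"] True np n4 by (simp add: adjo_def)
    moreover have "c(p+1) \<noteq> c(p+(n-1))" using c_off_eq[of 1 "n-1" p] np n4 by simp
    ultimately show ?thesis using card_ge2[OF finN] by auto
  next
    case False
    define t' where "t' = (if t+1 < n then t+1 else 0)"
    have "t' < n" using that np by (simp add: t'_def)
    have "t - 1 \<noteq> 2" "t - 1 < n" "t \<noteq> 2" using that False by auto
    then have "F (c(p+t)) (c(p+(t-1)))" using Fcc[of t "t-1"] that False np n4
      by (simp add: adjo_def)
    moreover have "F (c(p+t)) (c(p+t'))"
    proof -
      have "adjo n t t'" unfolding adjo_def t'_def using that by auto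
      moreover have "t' \<noteq> 2" unfolding t'_def using that False n4 by auto
      ultimately show ?thesis using Fcc[of t t'] \<open>t'<n\<close> that by simp
    qed
    moreover have "c(p+(t-1)) \<noteq> c(p+t')"
    proof -
      have "t - 1 \<noteq> t'" unfolding t'_def using that False by auto
      then show ?thesis using c_off_eq[of "t-1" t' p] \<open>t-1<n\<close> \<open>t'<n\<close> by blast
    qed
    ultimately show ?thesis using card_ge2[OF finN] by auto
  qed
  have leaves: "{v \<in> T. card {u. F v u} = 1} = {c(p+1), x, c(p+3)}"
  proof
    show "{v \<in> T. card {u. F v u} = 1} \<subseteq> {c(p+1), x, c(p+3)}"
    proof
      fix v assume "v \<in> {v \<in> T. card {u. F v u} = 1}"
      then have v: "v \<in> T" "card {u. F v u} = 1" by auto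
      then consider "v = x" | t where "t<n" "t\<noteq>2" "v = c(p+t)" using Tcases by blast
      then show "v \<in> {c(p+1), x, c(p+3)}"
      proof cases
        case 1 then show ?thesis by simp
      next
        case 2
        then have "t = 1 \<or> t = 3" using Lother[of t] v by auto
        then show ?thesis using 2 by auto
      qed
    qed
  next
    show "{c(p+1), x, c(p+3)} \<subseteq> {v \<in> T. card {u. F v u} = 1}"
      using Lx L1 L3 xT cT[of 1] cT[of 3] np by auto
  qed
  have Vc: "v = x \<or> (\<exists>t<n. v = c(p+t))" if "v \<in> insert (c(p+2)) T" for v
    using that Tcases np by blast
  have dcc: "diamond_edge (c(p+1)) x (c(p+3)) (c(p+2)) (c(p+s)) (c(p+t)) \<longleftrightarrow>
      (s = 3 \<and> t = 2) \<or> (s = 2 \<and> t = 3) \<or> (s = 2 \<and> t = 1) \<or> (s = 1 \<and> t = 2)" if "s<n" "t<n" for s t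
    unfolding diamond_edge_def using c_off_eq[of s 1 p] c_off_eq[of s 2 p] c_off_eq[of s 3 p]
      c_off_eq[of t 1 p] c_off_eq[of t 2 p] c_off_eq[of t 3 p] that c_ne_x np
    by (auto simp: doubleton_eq_iff)
  have dxc: "diamond_edge (c(p+1)) x (c(p+3)) (c(p+2)) x (c(p+t)) \<longleftrightarrow> t = 1 \<or> t = 2 \<or> t = 3" if "t<n" for t
    unfolding diamond_edge_def using c_off_eq[of t 1 p] c_off_eq[of t 2 p] c_off_eq[of t 3 p] that c_ne_x np
    by (auto simp: doubleton_eq_iff)
  have dcx: "diamond_edge (c(p+1)) x (c(p+3)) (c(p+2)) (c(p+t)) x \<longleftrightarrow> t = 1 \<or> t = 2 \<or> t = 3" if "t<n" for t
    using dxc[OF that] by (simp add: diamond_edge_def insert_commute)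
  have dxx: "\<not> diamond_edge (c(p+1)) x (c(p+3)) (c(p+2)) x x"
    unfolding diamond_edge_def using c_ne_x by (auto simp: doubleton_eq_iff)
  have induced: "\<forall>u \<in> insert (c(p+2)) T. \<forall>v \<in> insert (c(p+2)) T.
        E u v \<longleftrightarrow> (F u v \<or> diamond_edge (c(p+1)) x (c(p+3)) (c(p+2)) u v)"
  proof (intro ballI)
    fix u v assume u: "u \<in> insert (c(p+2)) T" and v: "v \<in> insert (c(p+2)) T"
    show "E u v \<longleftrightarrow> (F u v \<or> diamond_edge (c(p+1)) x (c(p+3)) (c(p+2)) u v)"
    proof (cases "u = x")
      case True
      show ?thesis
      proof (cases "v = x")
        case True then show ?thesis using \<open>u = x\<close> Eirr Fxx dxx by simp
      next
        case False
        then obtain t where t: "t<n" "v = c(p+t)" using Vc v by blast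
        have e: "E x (c(p+t)) \<longleftrightarrow> t \<le> 3" using nb t(1) by blast
        show ?thesis unfolding \<open>u = x\<close> t(2) Fxc[OF t(1)] dxc[OF t(1)] e by arith
      qed
    next
      case False
      then obtain s where s: "s<n" "u = c(p+s)" using Vc u by blast
      show ?thesis
      proof (cases "v = x")
        case True
        have "E (c(p+s)) x \<longleftrightarrow> E x (c(p+s))" using Esym by blast
        then have e: "E (c(p+s)) x \<longleftrightarrow> s \<le> 3" using nb s(1) by blast
        show ?thesis unfolding True s(2) Fcx[OF s(1)] dcx[OF s(1)] e by arith
      next
        case False
        then obtain t where t: "t<n" "v = c(p+t)" using Vc v by blast
        have ar: "adjo n s t \<longleftrightarrow> (s \<noteq> 2 \<and> t \<noteq> 2 \<and> adjo n s t) \<or>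
          ((s = 3 \<and> t = 2) \<or> (s = 2 \<and> t = 3) \<or> (s = 2 \<and> t = 1) \<or> (s = 1 \<and> t = 2))"
          using n4 s(1) t(1) unfolding adjo_def by arith
        show ?thesis unfolding s(2) t(2) E_off[OF s(1) t(1)] Fcc[OF s(1) t(1)] dcc[OF s(1) t(1)] by (rule ar)
      qed
    qed
  qed
  define T2 where "T2 = T - {c(p+1), x, c(p+3)}"
  have cT2: "c(p+t) \<in> T2 \<longleftrightarrow> t \<notin> {1,2,3}" if "t<n" for t
    unfolding T2_def using cT[OF that] c_off_eq[of t 1 p] c_off_eq[of t 3 p] that c_ne_x np by auto
  have xT2: "x \<notin> T2" by (simp add: T2_def)
  have T2cases: "\<exists>t<n. t \<notin> {1,2,3} \<and> v = c(p+t)" if "v \<in> T2" for v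
    using that Tcases xT2 cT2 by (metis T2_def DiffD1)
  have finT2: "finite T2" using finT by (simp add: T2_def)
  let ?R2 = "restr E T2"
  have down: "?R2\<^sup>*\<^sup>* (c p) (c(p+(n-k))) \<and> c(p+(n-k)) \<in> T2" if "k \<le> n-4" for k
    using that
  proof (induction k)
    case 0
    have "c(p+n) = c p" using c_n by simp
    then show ?case using cT2[of 0] np by simp
  next
    case (Suc k)
    then have IH: "?R2\<^sup>*\<^sup>* (c p) (c(p+(n-k)))" "c(p+(n-k)) \<in> T2" by auto
    have e: "p+(n-k) = Suc (p+(n-Suc k))" using Suc.prems n4 by simp
    have "n - Suc k < n" "n - Suc k \<notin> {1,2,3}" using Suc.prems n4 by auto
    then have m: "c(p+(n-Suc k)) \<in> T2" using cT2[of "n - Suc k"] by blast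
    have "E (c(p+(n-k))) (c(p+(n-Suc k)))" using E_succ Esym e by metis
    then have "?R2 (c(p+(n-k))) (c(p+(n-Suc k)))" using IH m by (simp add: restr_def)
    then show ?case using IH m by (meson rtranclp.rtrancl_into_rtrancl)
  qed
  have reach2: "\<forall>y\<in>T2. ?R2\<^sup>*\<^sup>* (c p) y"
  proof
    fix y assume "y \<in> T2"
    then obtain t where t: "t<n" "t \<notin> {1,2,3}" "y = c(p+t)" using T2cases by blast
    show "?R2\<^sup>*\<^sup>* (c p) y"
    proof (cases "t = 0")
      case True then show ?thesis using t by simp
    next
      case False
      then have "n - (n - t) = t" "n - t \<le> n - 4" using t by auto
      then show ?thesis using down[of "n-t"] t by simp
    qed
  qed
  have conT2: "connected_on E T2"
    by (rule connected_root[of E "c p"]) (use Esym cT2[of 0] np reach2 in auto)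
  define w2 where "w2 = (\<lambda>v. let t = off p v in if t = 0 then n else t)"
  have w2c: "w2 (c(p+t)) = (if t = 0 then n else t)" if "t<n" for t
    unfolding w2_def using off_c[OF that] by simp
  have nocyc2: "\<nexists>cs. is_cycle_in E T2 cs"
  proof -
    have "\<not> is_cycle_in E T2 cs'" for cs'
    proof (rule no_cycle_rank[where w=w2])
      show "E u v \<Longrightarrow> E v u" for u v by (rule Esym)
    next
      fix v u1 u2 assume v: "v \<in> T2" and u1: "u1 \<in> T2" and u2: "u2 \<in> T2" and f1: "E v u1" and f2: "E v u2"
        and w1: "w2 u1 \<le> w2 v" and w2: "w2 u2 \<le> w2 v"
      obtain t where t: "t<n" "t \<notin> {1,2,3}" "v = c(p+t)" using T2cases v by blast
      obtain s1 where s1: "s1<n" "s1 \<notin> {1,2,3}" "u1 = c(p+s1)" using T2cases u1 by blast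
      obtain s2 where s2: "s2<n" "s2 \<notin> {1,2,3}" "u2 = c(p+s2)" using T2cases u2 by blast
      have "s1 = s2"
        using rank2[of n s1 s2 t] n4 s1 s2 t f1 f2 E_off w1 w2 w2c by auto
      then show "u1 = u2" using s1 s2 by simp
    qed
    then show ?thesis by blast
  qed
  have tree2: "is_tree E T2" unfolding is_tree_def using finT2 conT2 nocyc2 by blast
  have nadj: "\<forall>u \<in> T2. \<not> E u (c(p+2))"
  proof
    fix u assume "u \<in> T2"
    then obtain t where t: "t<n" "t \<notin> {1,2,3}" "u = c(p+t)" using T2cases by blast
    show "\<not> E u (c(p+2))" using E_off[OF t(1) np(3)] t n4 by (auto simp: adjo_def)
  qed
  have dist4: "distinct [c(p+1), x, c(p+3), c(p+2)]" using c_off_eq[of 1 3 p] c_off_eq[of 1 2 p] c_off_eq[of 3 2 p] np c_ne_x by auto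
  have inV: "{c(p+1), x, c(p+3), c(p+2)} \<subseteq> V" using c_V xV by auto
  have edges: "E (c(p+1)) x" "E x (c(p+3))" "E (c(p+3)) (c(p+2))" "E (c(p+2)) (c(p+1))" "E x (c(p+2))"
    "\<not> E (c(p+1)) (c(p+3))"
  proof -
    have a: "E x (c(p+1))" "E x (c(p+2))" "E x (c(p+3))"
      using nb[rule_format, of 1] nb[rule_format, of 2] nb[rule_format, of 3] np by auto
    show "E (c(p+1)) x" using a(1) Esym by blast
    show "E x (c(p+3))" "E x (c(p+2))" using a by auto
    show "E (c(p+3)) (c(p+2))" "E (c(p+2)) (c(p+1))" "\<not> E (c(p+1)) (c(p+3))"
      using E_off[of 3 2 p] E_off[of 2 1 p] E_off[of 1 3 p] n4 by (auto simp: adjo_def)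
  qed
  have TV: "T \<subseteq> V - {c(p+2)}"
  proof
    fix v assume "v \<in> T"
    then consider "v = x" | t where "t<n" "t \<noteq> 2" "v = c(p+t)" using Tcases by blast
    then show "v \<in> V - {c(p+2)}"
    proof cases
      case 1 then show ?thesis using xV c_ne_x by auto
    next
      case 2 then show ?thesis using c_off_eq[of t 2 p] np c_V by auto
    qed
  qed
  have bT: "{c(p+1), x, c(p+3)} \<subseteq> T" using cT[of 1] cT[of 3] xT np by auto
  have "beetle V E (c(p+1)) x (c(p+3)) (c(p+2)) T F"
    unfolding beetle_def
    using dist4 inV edges TV bT FTE Fsym treeT leaves induced tree2 nadj
    by (simp only: T2_def) blast
  then show ?thesis by blast
qed

lemma shift: "c (a + k + t) = c (a + (k + t) mod n)"
  by (simp add: c_eq_iff add.assoc mod_add_right_eq)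

lemma classify:
  assumes bf: "beetle_free V E" and cl: "clean V E C" and xn: "x \<in> nbhd V E C"
  shows "x \<in> Nij V E C 1 1 \<union> Ni V E C 1 \<union> Ni V E C 2 \<union> Ni V E C 3"
proof -
  have n4: "4 \<le> n" using len .
  define N where "N = nbC E C x"
  have nm: "x \<notin> major V E C" using cl by (simp add: clean_def)
  have xnm: "x \<in> nbhd V E C - major V E C" using xn nm by simp
  have NC: "N \<subseteq> C" by (auto simp: N_def nbC_def)
  have finC: "finite C" using cs_set by auto
  have finN: "finite N" using NC finC finite_subset by blast
  have Nne: "N \<noteq> {}" using xn by (auto simp: N_def nbC_def nbhd_def)
  have indep: "E u v \<or> E u w \<or> E v w" if "u\<in>N" "v\<in>N" "w\<in>N" "u\<noteq>v" "u\<noteq>w" "v\<noteq>w" for u v w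
    using nm that xV xC by (auto simp: major_def N_def)
  have nobeetle: "\<not> beetle V E b1 b2 b3 b4 T F" for b1 b2 b3 b4 T F
    using bf by (auto simp: beetle_free_def)
  have Nmem: "u \<in> N \<longleftrightarrow> u \<in> C \<and> E x u" for u by (simp add: N_def nbC_def)
  show ?thesis
  proof (cases "\<exists>u\<in>N. \<exists>v\<in>N. E u v")
    case False
    have "\<not> 3 \<le> card N"
    proof
      assume "3 \<le> card N"
      then obtain u v w where "u\<in>N" "v\<in>N" "w\<in>N" "u\<noteq>v" "u\<noteq>w" "v\<noteq>w" using three_elems by blast
      then show False using indep False by blast
    qed
    moreover have "card N \<noteq> 0" using finN Nne by simp
    ultimately consider "card N = 1" | "card N = 2" by linarith
    then show ?thesis
    proof cases
      case 1
      then obtain u where "N = {u}" using card_1_singletonE by blast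
      then have "x \<in> Ni V E C 1" using xnm 1 connected_single unfolding Ni_def N_def by auto
      then show ?thesis by blast
    next
      case 2
      then obtain u v where uv: "N = {u,v}" "u \<noteq> v" by (meson card_2_iff)
      have "comps E N = {{u},{v}}"
        by (rule comps_two) (use uv False Eirr connected_single in auto)
      then have "comps E N = {{u},{v}} \<and> {u} \<noteq> {v} \<and> card {u} = 1 \<and> card {v} = 1" using uv by auto
      then have "\<exists>P Q. comps E N = {P,Q} \<and> P \<noteq> Q \<and> card P = 1 \<and> card Q = 1" by blast
      then have "x \<in> Nij V E C 1 1" using xnm unfolding Nij_def N_def by blast
      then show ?thesis by blast
    qed
  next
    case True
    then obtain u v where uv: "u \<in> N" "v \<in> N" "E u v" by blast
    obtain i where i: "i<n" "u = c(0+i)" using c_repr NC uv by blast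
    obtain t where t: "t<n" "v = c(i+t)" using c_repr NC uv by blast
    have "adjo n 0 t" using E_off[of 0 t i] t i uv npos by simp
    then have "t = 1 \<or> t = n - 1" by (auto simp: adjo_def)
    then obtain a where a0: "c a \<in> N" and a1: "c (a+1) \<in> N"
    proof
      assume "t = 1" then show thesis using that[of i] uv i t by simp
    next
      assume "t = n - 1"
      then have "c (i + (n-1) + 1) = u" using i c_n npos by (simp add: add.assoc)
      then show thesis using that[of "i + (n-1)"] uv t \<open>t = n-1\<close> by simp
    qed
    define P where "P = (\<lambda>t. E x (c(a+t)))"
    have P0: "P 0" and P1: "P 1" using a0 a1 Nmem by (auto simp: P_def)
    have Nimg: "N = (\<lambda>t. c(a+t)) ` {t. t<n \<and> P t}"
    proof
      show "N \<subseteq> (\<lambda>t. c(a+t)) ` {t. t<n \<and> P t}"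
      proof
        fix y assume "y \<in> N"
        then obtain t where "t<n" "y = c(a+t)" using c_repr NC by blast
        then show "y \<in> (\<lambda>t. c(a+t)) ` {t. t<n \<and> P t}" using \<open>y\<in>N\<close> Nmem by (auto simp: P_def)
      qed
    qed (auto simp: P_def Nmem c_in)
    have ind: False if "s<n" "t<n" "r<n" "s\<noteq>t" "s\<noteq>r" "t\<noteq>r" "P s" "P t" "P r"
      "\<not> adjo n s t" "\<not> adjo n s r" "\<not> adjo n t r" for s t r
    proof -
      have "c(a+s) \<in> N" "c(a+t) \<in> N" "c(a+r) \<in> N" using that Nmem c_in by (auto simp: P_def)
      moreover have "c(a+s) \<noteq> c(a+t)" "c(a+s) \<noteq> c(a+r)" "c(a+t) \<noteq> c(a+r)" using that c_off_eq by auto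
      ultimately show False using indep E_off that by blast
    qed
    have Nexact: "N = (\<lambda>t. c(a+t)) ` K" if "\<forall>t<n. P t \<longleftrightarrow> t \<in> K" "K \<subseteq> {..<n}" for K
      using Nimg that by auto
    have cardK: "card ((\<lambda>t. c(a+t)) ` K) = card K" if "K \<subseteq> {..<n}" for K
    proof (rule card_image, rule inj_onI)
      fix s t assume "s \<in> K" "t \<in> K" "c(a+s) = c(a+t)"
      then show "s = t" using that c_off_eq[of s t a] by auto
    qed
    have beet: False if "\<forall>t<n. P ((k + t) mod n) \<longleftrightarrow> t \<le> 3" for k
    proof -
      have "\<forall>t<n. E x (c((a+k)+t)) \<longleftrightarrow> t \<le> 3" using that shift by (simp add: P_def)
      then show False using beetle_ex nobeetle by blast
    qed
    have n5: "n \<noteq> 5" using ev by auto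
    have modk: "(k+t) mod n = (if k+t<n then k+t else k+t-n)" if "k<n" "t<n" for k t
      using mod_small2[of "k+t" n] that by simp
    have Pn: "P t \<Longrightarrow> t < n \<Longrightarrow> c(a+t) \<in> N" for t using Nmem c_in by (simp add: P_def)
    consider (A) "P (n-1)" "P 2" | (B) "P (n-1)" "\<not> P 2" | (C) "\<not> P (n-1)" "P 2" | (D) "\<not> P (n-1)" "\<not> P 2"
      by blast
    then show ?thesis
    proof cases
      case A
      have char: "P t \<longleftrightarrow> t \<in> {n-1,0,1,2}" if t: "t<n" for t
      proof
        assume Pt: "P t"
        show "t \<in> {n-1,0,1,2}"
        proof (rule ccontr)
          assume nt: "t \<notin> {n-1,0,1,2}"
          show False
          proof (cases "t = n-2")
            case True
            note prev = this
            show False by (rule ind[of 0 2 t]) (use prev P0 A Pt t nt n4 n5 in \<open>auto simp: adjo_def\<close>)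
          next
            case False
            note prev = this
            show False by (rule ind[of "n-1" 1 t]) (use prev P1 A Pt t nt n4 in \<open>auto simp: adjo_def\<close>)
          qed
        qed
      qed (use A P0 P1 in auto)
      have "\<forall>t<n. P ((n-1 + t) mod n) \<longleftrightarrow> t \<le> 3"
      proof (intro allI impI)
        fix t assume t: "t<n"
        have m: "(n-1+t) mod n = (if t = 0 then n-1 else t-1)" using modk[of "n-1" t] t n4 by auto
        show "P ((n-1 + t) mod n) \<longleftrightarrow> t \<le> 3" unfolding m using char t n4 by auto
      qed
      then show ?thesis using beet by blast
    next
      case B
      have char: "P t \<longleftrightarrow> t \<in> {n-1,0,1} \<or> (t = n-2 \<and> P (n-2))" if t: "t<n" for t
      proof
        assume Pt: "P t"
        show "t \<in> {n-1,0,1} \<or> (t = n-2 \<and> P (n-2))"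
        proof (rule ccontr)
          assume nt: "\<not> (t \<in> {n-1,0,1} \<or> (t = n-2 \<and> P (n-2)))"
          then have prev: "t \<noteq> 2" "t \<noteq> n-2" "t \<noteq> n-1" "t \<noteq> 0" "t \<noteq> 1" using B Pt by auto
          show False by (rule ind[of "n-1" 1 t]) (use prev P1 B Pt t n4 in \<open>auto simp: adjo_def\<close>)
        qed
      qed (use B P0 P1 in auto)
      show ?thesis
      proof (cases "P (n-2)")
        case True
        then have "n-2 \<noteq> 2" using B by auto
        have "\<forall>t<n. P ((n-2 + t) mod n) \<longleftrightarrow> t \<le> 3"
        proof (intro allI impI)
          fix t assume t: "t<n"
          have m: "(n-2+t) mod n = (if t < 2 then n-2+t else t-2)" using modk[of "n-2" t] t n4 by auto
          show "P ((n-2 + t) mod n) \<longleftrightarrow> t \<le> 3" unfolding m using char t n4 True B by auto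
        qed
        then show ?thesis using beet by blast
      next
        case False
        have K: "\<forall>t<n. P t \<longleftrightarrow> t \<in> {n-1,0,1}" using char False by auto
        have Ks: "{n-1,0,1} \<subseteq> {..<n}" using n4 by auto
        have NI: "N = (\<lambda>t. c(a+t)) ` {n-1,0,1}" by (rule Nexact[OF K Ks])
        have cN: "card N = 3" unfolding NI cardK[OF Ks] using n4 by simp
        have NK: "N = {c(a+(n-1)), c a, c(a+1)}" unfolding NI by simp
        have e1: "E (c a) (c(a+(n-1)))" using E_off[of 0 "n-1" a] n4 npos by (simp add: adjo_def)
        have e2: "E (c a) (c(a+1))" using E_succ by simp
        have "connected_on E N" unfolding NK by (rule connected_triple[where F=E, OF e1 e2], erule Esym)
        then have "x \<in> Ni V E C 3" using xnm cN unfolding Ni_def N_def by auto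
        then show ?thesis by blast
      qed
    next
      case C
      have char: "P t \<longleftrightarrow> t \<in> {0,1,2} \<or> (t = 3 \<and> P 3)" if t: "t<n" for t
      proof
        assume Pt: "P t"
        show "t \<in> {0,1,2} \<or> (t = 3 \<and> P 3)"
        proof (rule ccontr)
          assume nt: "\<not> (t \<in> {0,1,2} \<or> (t = 3 \<and> P 3))"
          then have prev: "t \<noteq> n-1" "t \<noteq> 3" "t \<noteq> 0" "t \<noteq> 1" "t \<noteq> 2" using C Pt by auto
          show False by (rule ind[of 0 2 t]) (use prev P0 C Pt t n4 in \<open>auto simp: adjo_def\<close>)
        qed
      qed (use C P0 P1 in auto)
      show ?thesis
      proof (cases "P 3")
        case True
        have "\<forall>t<n. P ((0 + t) mod n) \<longleftrightarrow> t \<le> 3"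
          using char True C by auto
        then show ?thesis using beet by blast
      next
        case False
        have K: "\<forall>t<n. P t \<longleftrightarrow> t \<in> {0,1,2}" using char False by auto
        have Ks: "{0,1,2} \<subseteq> {..<n}" using n4 by auto
        have NI: "N = (\<lambda>t. c(a+t)) ` {0,1,2}" by (rule Nexact[OF K Ks])
        have cN: "card N = 3" unfolding NI cardK[OF Ks] by simp
        have NK: "N = {c a, c(a+1), c(a+2)}" unfolding NI by simp
        have e1: "E (c(a+1)) (c a)" using E_succ Esym by simp
        have e2: "E (c(a+1)) (c(a+2))" using E_succ[of "a+1"] by simp
        have "connected_on E N" unfolding NK by (rule connected_triple[where F=E, OF e1 e2], erule Esym)
        then have "x \<in> Ni V E C 3" using xnm cN unfolding Ni_def N_def by auto
        then show ?thesis by blast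
      qed
    next
      case D
      have far: "3 \<le> t \<and> t \<le> n-2" if "t<n" "P t" "t \<notin> {0,1}" for t
        using that D by (cases "t = 2 \<or> t = n-1") auto
      show ?thesis
      proof (cases "\<exists>q. 3 \<le> q \<and> q+1 \<le> n-2 \<and> P q \<and> P (q+1)")
        case True
        then obtain q where q: "3 \<le> q" "q+1 \<le> n-2" "P q" "P (q+1)" by blast
        have char: "P t \<longleftrightarrow> t \<in> {0,1,q,q+1}" if t: "t<n" for t
        proof
          assume Pt: "P t"
          show "t \<in> {0,1,q,q+1}"
          proof (rule ccontr)
            assume nt: "t \<notin> {0,1,q,q+1}"
            then have ft: "3 \<le> t \<and> t \<le> n-2" using far t Pt by auto
            show False
            proof (cases "t = q - 1")
              case True
              note prev = this
              show False by (rule ind[of 0 "q+1" t]) (use prev P0 q Pt t nt ft n4 in \<open>auto simp: adjo_def\<close>)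
            next
              case False
              note prev = this
              show False by (rule ind[of 0 q t]) (use prev P0 q Pt t nt ft n4 in \<open>auto simp: adjo_def\<close>)
            qed
          qed
        qed (use q P0 P1 in auto)
        have Ks: "{0,1,q,q+1} \<subseteq> {..<n}" using q n4 by auto
        have K: "\<forall>t<n. P t \<longleftrightarrow> t \<in> {0,1,q,q+1}" using char by blast
        have NI: "N = (\<lambda>t. c(a+t)) ` {0,1,q,q+1}" by (rule Nexact[OF K Ks])
        have NK: "N = {c a, c(a+1), c(a+q), c(a+(q+1))}" unfolding NI by simp
        define P' where "P' = {c a, c(a+1)}"
        define Q' where "Q' = {c(a+q), c(a+(q+1))}"
        have ne: "\<not> E (c(a+s)) (c(a+t))" if "s \<in> {0,1}" "t \<in> {q,q+1}" for s t
        proof -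
          have st: "s<n" "t<n" using that q n4 by auto
          have "\<not> adjo n s t" using that q n4 unfolding adjo_def by auto
          then show ?thesis using E_off[OF st, of a] by simp
        qed
        have ne1: "\<not> E (c a) (c(a+q))" "\<not> E (c a) (c(a+(q+1)))" "\<not> E (c(a+1)) (c(a+q))" "\<not> E (c(a+1)) (c(a+(q+1)))"
          using ne[of 0 q] ne[of 0 "q+1"] ne[of 1 q] ne[of 1 "q+1"] by auto
        have ne2: "\<not> E (c(a+q)) (c a)" "\<not> E (c(a+(q+1))) (c a)" "\<not> E (c(a+q)) (c(a+1))" "\<not> E (c(a+(q+1))) (c(a+1))"
          using ne1 Esym by blast+
        have d: "c a \<noteq> c(a+1)" "c(a+q) \<noteq> c(a+(q+1))" "c a \<noteq> c(a+q)" "c a \<noteq> c(a+(q+1))"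
          "c(a+1) \<noteq> c(a+q)" "c(a+1) \<noteq> c(a+(q+1))"
          using c_off_eq[of 0 1 a] c_off_eq[of q "q+1" a] c_off_eq[of 0 q a] c_off_eq[of 0 "q+1" a]
            c_off_eq[of 1 q a] c_off_eq[of 1 "q+1" a] q n4 npos by auto
        have e1: "E (c a) (c(a+1))" using E_succ by simp
        have e2: "E (c(a+q)) (c(a+(q+1)))" using E_succ[of "a+q"] by simp
        have "comps E N = {P', Q'}"
        proof (rule comps_two)
          show "N = P' \<union> Q'" unfolding NK P'_def Q'_def by auto
          show "connected_on E P'" unfolding P'_def by (rule connected_pair[where F=E, OF e1], erule Esym)
          show "connected_on E Q'" unfolding Q'_def by (rule connected_pair[where F=E, OF e2], erule Esym)
          show "\<forall>u\<in>P'. \<forall>v\<in>N. E u v \<longrightarrow> v \<in> P'" unfolding NK P'_def using ne1 by auto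
          show "\<forall>u\<in>Q'. \<forall>v\<in>N. E u v \<longrightarrow> v \<in> Q'" unfolding NK Q'_def using ne2 by auto
        qed (auto simp: P'_def Q'_def)
        moreover have "P' \<noteq> Q'" "card P' = 2" "card Q' = 2" unfolding P'_def Q'_def using d by auto
        ultimately have "x \<in> Nij V E C 2 2" using xnm unfolding Nij_def N_def by blast
        then show ?thesis using cl by (simp add: clean_def)
      next
        case nopair: False
        show ?thesis
        proof (cases "\<exists>q<n. P q \<and> q \<notin> {0,1}")
          case False
          have K: "\<forall>t<n. P t \<longleftrightarrow> t \<in> {0,1}" using False P0 P1 by auto
          have Ks: "{0,1} \<subseteq> {..<n}" using n4 by auto
          have NI: "N = (\<lambda>t. c(a+t)) ` {0,1}" by (rule Nexact[OF K Ks])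
          have cN: "card N = 2" unfolding NI cardK[OF Ks] by simp
          have NK: "N = {c a, c(a+1)}" unfolding NI by simp
          have e01: "E (c a) (c(a+1))" using E_succ by simp
          have "connected_on E N" unfolding NK by (rule connected_pair[where F=E, OF e01], erule Esym)
          then have "x \<in> Ni V E C 2" using xnm cN unfolding Ni_def N_def by auto
          then show ?thesis by blast
        next
          case True
          then obtain q where q: "q<n" "P q" "q \<notin> {0,1}" by blast
          have fq: "3 \<le> q" "q \<le> n-2" using far q by auto
          have char: "P t \<longleftrightarrow> t \<in> {0,1,q}" if t: "t<n" for t
          proof
            assume Pt: "P t"
            show "t \<in> {0,1,q}"
            proof (rule ccontr)
              assume nt: "t \<notin> {0,1,q}"
              then have ft: "3 \<le> t \<and> t \<le> n-2" using far t Pt by auto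
              show False
              proof (cases "t = q+1 \<or> q = t+1")
                case True
                then show False using nopair q fq ft Pt by auto
              next
                case False
                note prev = this
                show False by (rule ind[of 0 q t]) (use prev P0 q fq Pt t nt ft n4 in \<open>auto simp: adjo_def\<close>)
              qed
            qed
          qed (use q P0 P1 in auto)
          have "even (q-1) \<or> even (n-q)"
          proof -
            have "(q-1) + (n-q) = n-1" using fq by simp
            then show ?thesis using ev n4 by presburger
          qed
          then show ?thesis
          proof
            assume evq: "even (q-1)"
            have False
            proof (rule arc_hole[of "q-1" "a+1"])
              show "2 \<le> q-1" "q-1+2 < n" using fq by auto
              show "E x (c (a+1))" using P1 by (simp add: P_def)
              show "E x (c (a+1+(q-1)))" using q fq by (simp add: P_def)
              show "\<forall>t. 0<t \<and> t<q-1 \<longrightarrow> \<not> E x (c (a+1+t))"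
              proof (intro allI impI)
                fix t assume h: "0<t \<and> t<q-1"
                then have "1+t < n" "1+t \<notin> {0,1,q}" using fq by auto
                then have "\<not> P (1+t)" using char by blast
                then show "\<not> E x (c (a+1+t))" by (simp add: P_def add.assoc)
              qed
            qed (rule evq)
            then show ?thesis by blast
          next
            assume evq: "even (n-q)"
            have False
            proof (rule arc_hole[of "n-q" "a+q"])
              show "2 \<le> n-q" "n-q+2 < n" using fq by auto
              show "E x (c (a+q))" using q by (simp add: P_def)
              have "a+q+(n-q) = a + n" using fq by simp
              then show "E x (c (a+q+(n-q)))" using P0 c_n by (simp add: P_def)
              show "\<forall>t. 0<t \<and> t<n-q \<longrightarrow> \<not> E x (c (a+q+t))"
              proof (intro allI impI)
                fix t assume h: "0<t \<and> t<n-q"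
                then have "q+t < n" "q+t \<notin> {0,1,q}" using fq by auto
                then have "\<not> P (q+t)" using char by blast
                then show "\<not> E x (c (a+q+t))" by (simp add: P_def add.assoc)
              qed
            qed (rule evq)
            then show ?thesis by blast
          qed
        qed
      qed
    qed
  qed
qed

end

theorem lemma3:
  fixes V :: "'a set" and E :: "'a \<Rightarrow> 'a \<Rightarrow> bool" and C :: "'a set"
  assumes "simple_graph V E"
    and "beetle_free V E"
    and "shortest_even_hole V E C"
    and "clean V E C"
  shows "nbhd V E C \<subseteq> Nij V E C 1 1 \<union> Ni V E C 1 \<union> Ni V E C 2 \<union> Ni V E C 3"
proof
  fix x assume xn: "x \<in> nbhd V E C"
  have eh: "even_hole V E C" and sh: "\<forall>D. even_hole V E D \<longrightarrow> card C \<le> card D"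
    using assms(3) by (auto simp: shortest_even_hole_def)
  then have ho: "hole V E C" and evC: "even (card C)" by (auto simp: even_hole_def)
  then obtain cs where cs: "C \<subseteq> V" "set cs = C" "distinct cs" "length cs \<ge> 4"
    "\<forall>i < length cs. \<forall>j < length cs. E (cs ! i) (cs ! j) \<longleftrightarrow>
        (j = (i + 1) mod length cs \<or> i = (j + 1) mod length cs)"
    unfolding hole_def by blast
  have cC: "card C = length cs" using cs distinct_card by blast
  have xV: "x \<in> V" "x \<notin> C" using xn by (auto simp: nbhd_def)
  interpret ctx V E C cs x
    using assms(1) cs xV evC sh cC by unfold_locales auto
  show "x \<in> Nij V E C 1 1 \<union> Ni V E C 1 \<union> Ni V E C 2 \<union> Ni V E C 3"
    using classify assms(2,4) xn by blast
qed

end
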